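(* Let $n\geq 0$, $m\geq 2$ with $m$ even, and $1\leq a\leq 9$. Then $B_n \neq a\left(\frac{10^m-1}{9}\right)$. Consequently, if $B_n = a\frac{10^m-1}{9}$ for some $m\geq 2$ and $1\le a\le 9$, then $m$ is odd.
   Context: The balancing sequence $(B_n)_{n\geq 0}$ is defined by $B_0=0$, $B_1=1$ and $B_{n+1}=6B_n-B_{n-1}$ for $n\geq 1$. For $1\le a\le 9$ and $m\ge 1$, the number $a\frac{10^m-1}{9}$ is the decimal integer consisting of $m$ copies of the digit $a$. *)

theory Defs
  imports Main
begin

fun balancing :: "nat \<Rightarrow> int" where
  "balancing 0 = 0"
| "balancing (Suc 0) = 1"
| "balancing (Suc (Suc n)) = 6 * balancing (Suc n) - balancing n"

definition repdigit :: "nat \<Rightarrow> nat \<Rightarrow> int" where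
  "repdigit a m = int a * ((10 ^ m - 1) div 9)"

end

theory Submission
  imports Defs
begin

definition PP :: "(int \<times> int) set" where
 "PP = {(0,1),(1,6),(6,35),(35,94),(94,89),(89,0),(0,21),(21,16),(16,75),(75,104),(104,109),(109,0)}"

lemma aux: "(6*(x mod 110) - y mod 110) mod (110::int) = (6*x - y) mod 110"
proof -
  have "(6*(x mod 110) - y mod 110) mod (110::int) = (6*(x mod 110) - y) mod 110" by (rule mod_diff_right_eq)
  also have "\<dots> = ((6*(x mod 110)) mod 110 - y) mod 110" by (rule mod_diff_left_eq[symmetric])
  also have "\<dots> = ((6*x) mod 110 - y) mod 110" by (simp only: mod_mult_right_eq)
  also have "\<dots> = (6*x-y) mod 110" by (rule mod_diff_left_eq)
  finally show ?thesis .
qed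
lemma bal_step: "balancing (Suc (Suc n)) mod 110 = (6 * (balancing (Suc n) mod 110) - balancing n mod 110) mod 110"
  by (simp only: balancing.simps(3) aux)

lemma pp_closed: "(x,y) \<in> PP \<Longrightarrow> (y, (6*y - x) mod 110) \<in> PP"
  unfolding PP_def by (simp only: insert_iff prod.inject empty_iff) (elim disjE conjE; simp)

lemma bal_pp: "(balancing n mod 110, balancing (Suc n) mod 110) \<in> PP"
proof (induction n)
  case 0 then show ?case by (simp add: PP_def)
next
  case (Suc n)
  then show ?case unfolding bal_step[of n] by (rule pp_closed)
qed

lemma pp_fst: "(x,y) \<in> PP \<Longrightarrow> x \<in> {0,1,6,35,94,89,21,16,75,104,109}"
    unfolding PP_def by auto

lemma bal_mod: "balancing n mod 110 \<in> {0,1,6,35,94,89,21,16,75,104,109}"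
  using pp_fst[OF bal_pp[of n]] .

lemma pow_rep: "k \<ge> 1 \<Longrightarrow> \<exists>q::int. (10::int)^(2*k) = 9*(110*q+11)+1"
proof (induction k rule: dec_induct)
  case base then show ?case by (rule exI[of _ 0]) simp
next
  case (step k)
  then obtain q where q: "(10::int)^(2*k) = 9*(110*q+11)+1" by blast
  have "(10::int)^(2*Suc k) = 100 * 10^(2*k)" by (simp add: power_add power_mult)
  also have "\<dots> = 9*(110*(100*q+10)+11)+1" using q by simp
  finally show ?case by blast
qed

lemma rep_mod: assumes "2 \<le> m" "even m" shows "repdigit a m mod 110 = (int a * 11) mod 110"
proof -
  obtain k where k: "m = 2*k" using assms by blast
  with assms have "k \<ge> 1" by simp
  then obtain q where q: "(10::int)^m = 9*(110*q+11)+1" using pow_rep k by blast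
  have "((10::int)^m - 1) div 9 = 110*q+11" using q by simp
  then have "repdigit a m = int a * (110*q+11)" by (simp add: repdigit_def)
  also have "\<dots> = int a * 11 + 110 * (int a * q)" by (simp add: algebra_simps)
  finally show ?thesis by simp
qed

lemma first: assumes "2 \<le> m" "even m" "1 \<le> a" "a \<le> 9"
  shows "balancing n \<noteq> repdigit a m"
proof
  assume h: "balancing n = repdigit a m"
  have "a=1 \<or> a=2 \<or> a=3 \<or> a=4 \<or> a=5 \<or> a=6 \<or> a=7 \<or> a=8 \<or> a=9" using assms(3,4) by arith
  then have t: "int a * 11 mod 110 \<in> {11,22,33,44,55,66,77,88,99}"
    by (elim disjE) simp_all
  have "balancing n mod 110 = int a * 11 mod 110" using h rep_mod[OF assms(1,2), of a] by simp
  with t have "balancing n mod 110 \<in> {0,1,6,35,94,89,21,16,75,104,109} \<inter> {11,22,33,44,55,66,77,88,99}"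
    using bal_mod[of n] by (simp only: IntI)
  moreover have "{0,1,6,35,94,89,21,16,75,104,109} \<inter> {11,22,33,44,55,66,77,88,99::int} = {}" by simp
  ultimately show False by (simp only: empty_iff)
qed

theorem mainTheorem2:
  shows "(\<forall>n m a. 2 \<le> m \<and> even m \<and> 1 \<le> a \<and> a \<le> 9 \<longrightarrow> balancing n \<noteq> repdigit a m)
       \<and> (\<forall>n m a. 2 \<le> m \<and> 1 \<le> a \<and> a \<le> 9 \<and> balancing n = repdigit a m \<longrightarrow> odd m)"
  using first by blast

end
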